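(* Let $\langle\,,\rangle$ be the bilinear form on $K\{X\}_\infty$ for which the monomials are orthonormal (extended to tensor products by $\langle f_1\otimes f_2,g_1\otimes g_2\rangle=\langle f_1,g_1\rangle\langle f_2,g_2\rangle$), and define $\sqcup\!\sqcup:K\{X\}_\infty\otimes K\{X\}_\infty\to K\{X\}_\infty$ by $\langle g_1\sqcup\!\sqcup g_2,h\rangle=\langle g_1\otimes g_2,\Delta_a(h)\rangle$ for all $h$ (i.e. the graded dual of $\Delta_a$, with $K\{X\}_\infty$ identified with its graded dual via the dual basis of monomials). Then $\sqcup\!\sqcup$ is a commutative associative multiplication with $1\sqcup\!\sqcup1=1$, and for monomials $T^1,T^2$, $$T^1\sqcup\!\sqcup T^2=\sum_{T\text{ a shuffle of }T^1\text{ and }T^2}c_T\,T,$$ where $c_T\ge1$ is the number of subsets $I\subseteq\mathrm{Le}(T)$ with $\mathrm{red}(T|I)=T^1$ and $\mathrm{red}(T|I^c)=T^2$.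
   Context: $K$ is a field of characteristic $0$ and $X=\{x_1,x_2,\dots\}$ a finite or countable set of variables. A planar rooted tree is reduced if no vertex has exactly one incoming edge. $K\{X\}_\infty$ has basis the monomials: the empty tree $1$ and all planar reduced rooted trees with leaves labelled by elements of $X$, graded by number of leaves; for $k\ge2$, $\vee^k$ grafts $k$ nonempty trees (in order) onto a new root, extended multilinearly, with unit conventions (arguments $1$ omitted, $\vee^1=\mathrm{id}$, $\vee^k(1,\dots,1)=1$). The tensor square carries the operations componentwise, and $\Delta_a$ is the unique unital homomorphism with $\Delta_a(x_i)=x_i\otimes1+1\otimes x_i$. $\mathrm{Le}(T)$ is the set of leaves of $T$, $I^c=\mathrm{Le}(T)\setminus I$. The leaf-restriction $T|I$ is obtained from $T$ by deleting every vertex whose full subtree contains no leaf of $I$ (empty tree $1$ if $I=\emptyset$); $\mathrm{red}(S)$ deletes all vertices with exactly one child, keeping labels, the descendant relation and the planar order. $T$ is a shuffle of $T^1$ and $T^2$ if $\mathrm{red}(T|I)=T^1$ and $\mathrm{red}(T|I^c)=T^2$ for some $I\subseteq\mathrm{Le}(T)$. *)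

theory Defs
  imports Main "HOL-Library.Countable"
begin

text \<open>The empty tree 1 is represented by Node [].
  Positions of vertices (hence leaves) are paths: lists of child indices.\<close>

datatype 'x tree = Leaf 'x | Node "'x tree list"

fun reduced :: "'x tree \<Rightarrow> bool" where
  "reduced (Leaf x) = True"
| "reduced (Node ts) = (2 \<le> length ts \<and> (\<forall>t\<in>set ts. reduced t))"

definition is_mono :: "'x tree \<Rightarrow> bool" where
  "is_mono t \<longleftrightarrow> t = Node [] \<or> reduced t"

definition vee_mono :: "'x tree list \<Rightarrow> 'x tree" where
  "vee_mono ts = (let us = filter (\<lambda>t. t \<noteq> Node []) ts in
     (case us of [] \<Rightarrow> Node [] | [u] \<Rightarrow> u | _ \<Rightarrow> Node us))"

fun subtree_at :: "'x tree \<Rightarrow> nat list \<Rightarrow> 'x tree option" where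
  "subtree_at t [] = Some t"
| "subtree_at (Leaf x) (i # p) = None"
| "subtree_at (Node ts) (i # p) = (if i < length ts then subtree_at (ts ! i) p else None)"

definition Le :: "'x tree \<Rightarrow> nat list set" where
  "Le T = {p. \<exists>x. subtree_at T p = Some (Leaf x)}"

text \<open>restr p t I: the tree t (located at position p inside the whole tree) with every
  vertex deleted whose subtree contains no leaf of I; None if nothing remains.\<close>
fun restr :: "nat list \<Rightarrow> 'x tree \<Rightarrow> nat list set \<Rightarrow> 'x tree option"
and restrs :: "nat list \<Rightarrow> nat \<Rightarrow> 'x tree list \<Rightarrow> nat list set \<Rightarrow> 'x tree list" where
  "restr p (Leaf x) I = (if p \<in> I then Some (Leaf x) else None)"
| "restr p (Node ts) I = (case restrs p 0 ts I of [] \<Rightarrow> None | cs \<Rightarrow> Some (Node cs))"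
| "restrs p i [] I = []"
| "restrs p i (t # ts) I =
     (case restr (p @ [i]) t I of
        None \<Rightarrow> restrs p (Suc i) ts I
      | Some s \<Rightarrow> s # restrs p (Suc i) ts I)"

definition leaf_restrict :: "'x tree \<Rightarrow> nat list set \<Rightarrow> 'x tree" where
  "leaf_restrict T I = (case restr [] T I of None \<Rightarrow> Node [] | Some s \<Rightarrow> s)"

fun red :: "'x tree \<Rightarrow> 'x tree" where
  "red (Leaf x) = Leaf x"
| "red (Node [t]) = red t"
| "red (Node ts) = Node (map red ts)"

definition shuffle_sets :: "'x tree \<Rightarrow> 'x tree \<Rightarrow> 'x tree \<Rightarrow> nat list set set" where
  "shuffle_sets T T1 T2 = {I. I \<subseteq> Le T \<and> red (leaf_restrict T I) = T1
                               \<and> red (leaf_restrict T (Le T - I)) = T2}"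

definition is_shuffle :: "'x tree \<Rightarrow> 'x tree \<Rightarrow> 'x tree \<Rightarrow> bool" where
  "is_shuffle T T1 T2 \<longleftrightarrow> (\<exists>I. I \<subseteq> Le T \<and> red (leaf_restrict T I) = T1
                               \<and> red (leaf_restrict T (Le T - I)) = T2)"

definition shuffle_coeff :: "'x tree \<Rightarrow> 'x tree \<Rightarrow> 'x tree \<Rightarrow> nat" where
  "shuffle_coeff T T1 T2 = card (shuffle_sets T T1 T2)"

text \<open>Elements of K{X}_infinity are coefficient functions on trees, finitely supported on
  monomials; elements of the tensor square are coefficient functions on pairs of monomials.\<close>

definition supp :: "('a \<Rightarrow> 'k::zero) \<Rightarrow> 'a set" where
  "supp f = {a. f a \<noteq> 0}"

definition inK :: "('x tree \<Rightarrow> 'k::zero) \<Rightarrow> bool" where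
  "inK f \<longleftrightarrow> finite (supp f) \<and> supp f \<subseteq> {t. is_mono t}"

definition mono_vec :: "'x tree \<Rightarrow> 'x tree \<Rightarrow> 'k::{zero,one}" where
  "mono_vec T = (\<lambda>S. if S = T then 1 else 0)"

definition tensor :: "('x tree \<Rightarrow> 'k::times) \<Rightarrow> ('x tree \<Rightarrow> 'k) \<Rightarrow> ('x tree \<times> 'x tree \<Rightarrow> 'k)" where
  "tensor f g = (\<lambda>(a, b). f a * g b)"

text \<open>Grafting in the tensor square, componentwise and multilinearly:
  vee(a1 (x) b1, ..., ak (x) bk) = vee(a1,...,ak) (x) vee(b1,...,bk).\<close>
definition vee_tens :: "('x tree \<times> 'x tree \<Rightarrow> 'k::comm_ring_1) list \<Rightarrow> ('x tree \<times> 'x tree \<Rightarrow> 'k)" where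
  "vee_tens Gs = (\<lambda>(A, B).
     \<Sum>ps \<in> {ps. length ps = length Gs \<and> (\<forall>i<length Gs. (Gs ! i) (ps ! i) \<noteq> 0)
                 \<and> vee_mono (map fst ps) = A \<and> vee_mono (map snd ps) = B}.
       \<Prod>i<length Gs. (Gs ! i) (ps ! i))"

text \<open>Delta_a on monomials: the unital homomorphism for all grafting operations with
  Delta_a(x) = x (x) 1 + 1 (x) x. Every monomial Node [T1,...,Tk] equals vee^k(T1,...,Tk),
  so the homomorphism property determines it recursively (Node [] = 1 gives 1 (x) 1).\<close>
fun Delta_m :: "'x tree \<Rightarrow> ('x tree \<times> 'x tree \<Rightarrow> 'k::comm_ring_1)" where
  "Delta_m (Leaf x) = (\<lambda>P. (if P = (Leaf x, Node []) then 1 else 0)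
                          + (if P = (Node [], Leaf x) then 1 else 0))"
| "Delta_m (Node ts) = vee_tens (map Delta_m ts)"

definition pair2 :: "('x tree \<times> 'x tree \<Rightarrow> 'k::comm_ring_1) \<Rightarrow> ('x tree \<times> 'x tree \<Rightarrow> 'k) \<Rightarrow> 'k" where
  "pair2 F G = (\<Sum>p \<in> supp F \<inter> supp G. F p * G p)"

definition shuffle :: "('x tree \<Rightarrow> 'k::comm_ring_1) \<Rightarrow> ('x tree \<Rightarrow> 'k) \<Rightarrow> ('x tree \<Rightarrow> 'k)" where
  "shuffle g1 g2 = (\<lambda>T. if is_mono T then pair2 (tensor g1 g2) (Delta_m T) else 0)"

end

theory Submission
  imports Defs "HOL-Library.Multiset"
begin


definition mbind :: "'a multiset \<Rightarrow> ('a \<Rightarrow> 'b multiset) \<Rightarrow> 'b multiset" where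
  "mbind M f = (\<Sum>x\<in>#M. f x)"

lemma mbind_empty[simp]: "mbind {#} f = {#}" by (simp add: mbind_def)
lemma mbind_add[simp]: "mbind (add_mset x M) f = f x + mbind M f" by (simp add: mbind_def)
lemma mbind_union[simp]: "mbind (M + N) f = mbind M f + mbind N f" by (simp add: mbind_def)
lemma mbind_single[simp]: "mbind {#x#} f = f x" by simp

lemma image_mbind: "image_mset g (mbind M f) = mbind M (\<lambda>x. image_mset g (f x))"
  by (induction M) auto
lemma mbind_image: "mbind (image_mset g M) f = mbind M (\<lambda>x. f (g x))"
  by (induction M) auto
lemma mbind_assoc: "mbind (mbind M f) h = mbind M (\<lambda>x. mbind (f x) h)"
  by (induction M) auto
lemma mbind_plus: "mbind M (\<lambda>x. f x + g x) = mbind M f + mbind M g"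
  by (induction M) auto
lemma mbind_zero[simp]: "mbind M (\<lambda>x. {#}) = {#}"
  by (induction M) auto
lemma mbind_commute: "mbind M (\<lambda>x. mbind N (f x)) = mbind N (\<lambda>y. mbind M (\<lambda>x. f x y))"
  by (induction M) (auto simp: mbind_plus)
lemma mbind_singleton_fun: "mbind M (\<lambda>x. {#g x#}) = image_mset g M"
  by (induction M) auto
lemma mbind_cong: "(\<And>x. x \<in># M \<Longrightarrow> f x = g x) \<Longrightarrow> mbind M f = mbind M g"
  unfolding mbind_def by (metis image_mset_cong)
lemma count_mbind: "count (mbind M f) y = (\<Sum>x\<in>#M. count (f x) y)"
  by (induction M) auto
lemma in_mbind: "y \<in># mbind M f \<longleftrightarrow> (\<exists>x\<in>#M. y \<in># f x)"
  by (induction M) auto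

lemma sum_mset_if_eq: "(\<Sum>x\<in>#M. (if x = y then c else 0)) = of_nat (count M y) * (c::'a::semiring_1)"
  by (induction M) (auto simp: algebra_simps)

lemma sum_mset_as_sum:
  assumes "finite S" "set_mset M \<subseteq> S"
  shows "(\<Sum>x\<in>#M. f x) = (\<Sum>x\<in>S. of_nat (count M x) * (f x :: 'a::semiring_1))"
  using assms(2)
proof (induction M)
  case empty then show ?case by simp
next
  case (add a M)
  have "(\<Sum>x\<in>S. of_nat (count (add_mset a M) x) * f x)
      = (\<Sum>x\<in>S. of_nat (count M x) * f x + (if x = a then f x else 0))"
    by (rule sum.cong) (auto simp: algebra_simps)
  also have "\<dots> = (\<Sum>x\<in>S. of_nat (count M x) * f x) + f a"
    using add.prems assms(1) by (simp add: sum.distrib)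
  finally show ?case using add by (simp add: add.commute)
qed

fun lprod :: "'a multiset list \<Rightarrow> 'a list multiset" where
  "lprod [] = {#[]#}"
| "lprod (M # Ms) = mbind M (\<lambda>x. image_mset ((#) x) (lprod Ms))"

lemma count_image_Cons: "count (image_mset ((#) x) L) (y # ys) = (if x = y then count L ys else 0)"
  by (induction L) auto

lemma count_lprod_Cons: "count (lprod (M # Ms)) (y # ys) = count M y * count (lprod Ms) ys"
proof -
  have "count (lprod (M # Ms)) (y # ys) = (\<Sum>x\<in>#M. (if x = y then count (lprod Ms) ys else 0))"
    by (simp add: count_mbind count_image_Cons)
  also have "\<dots> = count M y * count (lprod Ms) ys" using sum_mset_if_eq[where M=M and y=y and c="count (lprod Ms) ys"] by simp
  finally show ?thesis .
qed

lemma count_lprod_Nil: "count (lprod (M # Ms)) [] = 0"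
  by (auto simp: count_eq_zero_iff in_mbind)

lemma count_lprod:
  "count (lprod Ms) xs = (if length xs = length Ms then (\<Prod>i<length Ms. count (Ms ! i) (xs ! i)) else 0)"
proof (induction Ms arbitrary: xs)
  case Nil then show ?case by (cases xs) auto
next
  case (Cons M Ms)
  show ?case
  proof (cases xs)
    case Nil then show ?thesis using count_lprod_Nil[of M Ms] by simp
  next
    case (Cons y ys)
    then show ?thesis using Cons.IH[of ys] count_lprod_Cons[of M Ms y ys]
      by (simp del: lprod.simps prod.lessThan_Suc add: prod.lessThan_Suc_shift)
  qed
qed

lemma in_lprod: "xs \<in># lprod Ms \<longleftrightarrow> length xs = length Ms \<and> (\<forall>i<length Ms. xs ! i \<in># Ms ! i)"
  by (auto simp: count_lprod simp flip: count_greater_zero_iff)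

lemma in_lprod_Cons: "xs \<in># lprod (M # Ms) \<longleftrightarrow> (\<exists>y ys. xs = y # ys \<and> y \<in># M \<and> ys \<in># lprod Ms)"
  by (auto simp: in_mbind)

lemma lprod_image:
  "lprod (map (\<lambda>x. image_mset (f x) (h x)) xs) = image_mset (\<lambda>ys. map2 f xs ys) (lprod (map h xs))"
proof (induction xs)
  case Nil then show ?case by simp
next
  case (Cons a xs)
  show ?case
    by (simp add: Cons mbind_image image_mbind multiset.map_comp o_def)
qed

lemma lprod_mbind:
  "lprod (map (\<lambda>x. mbind (h x) F) xs) = mbind (lprod (map h xs)) (\<lambda>ys. lprod (map F ys))"
proof (induction xs)
  case Nil then show ?case by simp
next
  case (Cons a xs)
  show ?case
    by (simp add: Cons mbind_assoc mbind_image image_mbind)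
       (subst mbind_commute, rule refl)
qed

lemma lprod_mset_set:
  assumes "\<And>i. i < length As \<Longrightarrow> finite (As ! i)"
  shows "lprod (map mset_set As) = mset_set {xs. length xs = length As \<and> (\<forall>i<length As. xs ! i \<in> As ! i)}"
proof -
  let ?S = "{xs. length xs = length As \<and> (\<forall>i<length As. xs ! i \<in> As ! i)}"
  have c: "count (lprod (map mset_set As)) xs = (if xs \<in> ?S then 1 else 0)" for xs
    using assms by (auto simp: count_lprod count_mset_set' intro!: prod.neutral)
  have "set_mset (lprod (map mset_set As)) = ?S"
    by (auto simp: c simp flip: count_greater_zero_iff split: if_splits)
  then have "finite ?S" by (metis finite_set_mset)
  then show ?thesis by (intro multiset_eqI) (simp add: c count_mset_set')
qed



definition vp :: "('x tree \<times> 'x tree) list \<Rightarrow> 'x tree \<times> 'x tree" where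
  "vp ps = (vee_mono (map fst ps), vee_mono (map snd ps))"

fun D :: "'x tree \<Rightarrow> ('x tree \<times> 'x tree) multiset" where
  "D (Leaf x) = {#(Leaf x, Node []), (Node [], Leaf x)#}"
| "D (Node ts) = image_mset vp (lprod (map D ts))"

lemma D_one: "D (Node []) = {#(Node [], Node [])#}"
  by (simp add: vp_def vee_mono_def)

lemma Delta_m_D: "(Delta_m T :: _ \<Rightarrow> 'k::{comm_ring_1,ring_char_0}) = (\<lambda>P. of_nat (count (D T) P))"
proof (induction T)
  case (Leaf x)
  show ?case by (rule ext) simp
next
  case (Node ts)
  have IH: "\<And>i. i < length ts \<Longrightarrow> (Delta_m (ts ! i) :: _ \<Rightarrow> 'k) = (\<lambda>P. of_nat (count (D (ts ! i)) P))"
    using Node by auto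
  show ?case
  proof (rule ext, clarify)
    fix A B :: "'a tree"
    let ?L = "lprod (map D ts)"
    have S: "{ps. length ps = length (map Delta_m ts) \<and> (\<forall>i<length (map Delta_m ts). ((map Delta_m ts ! i) (ps ! i) :: 'k) \<noteq> 0)
              \<and> vee_mono (map fst ps) = A \<and> vee_mono (map snd ps) = B}
           = vp -` {(A,B)} \<inter> set_mset ?L"
    proof -
      have key: "i < length ts \<Longrightarrow> ((Delta_m (ts!i) :: _ \<Rightarrow> 'k) P \<noteq> 0) = (P \<in># D (ts!i))" for i P
        using IH[of i] by simp
      show ?thesis by (rule set_eqI) (simp add: in_lprod vp_def key, blast)
    qed
    have "(Delta_m (Node ts) :: _ \<Rightarrow> 'k) (A, B) = (\<Sum>ps\<in>vp -` {(A,B)} \<inter> set_mset ?L. \<Prod>i<length ts. (Delta_m (ts ! i) :: _ \<Rightarrow> 'k) (ps ! i))"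
      by (simp only: Delta_m.simps vee_tens_def S split) simp
    also have "\<dots> = (\<Sum>ps\<in>vp -` {(A,B)} \<inter> set_mset ?L. of_nat (count ?L ps))"
    proof (rule sum.cong[OF refl])
      fix ps assume "ps \<in> vp -` {(A,B)} \<inter> set_mset ?L"
      then have "length ps = length ts" by (simp add: in_lprod)
      then show "(\<Prod>i<length ts. (Delta_m (ts ! i) :: _ \<Rightarrow> 'k) (ps ! i)) = of_nat (count ?L ps)"
        by (simp add: count_lprod IH of_nat_prod)
    qed
    also have "\<dots> = of_nat (count (D (Node ts)) (A, B))"
      by (simp add: count_image_mset)
    finally show "(Delta_m (Node ts) :: _ \<Rightarrow> 'k) (A, B) = of_nat (count (D (Node ts)) (A, B))" .
  qed
qed

lemma map2_snd: "length qs = length ps \<Longrightarrow> map2 (\<lambda>x y. g y) ps qs = map g qs"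
  by (induction ps qs rule: list_induct2') auto
lemma map_zip_snd: "length qs = length ps \<Longrightarrow> map (\<lambda>(x,y). g y) (zip ps qs) = map g qs"
  by (induction ps qs rule: list_induct2') auto
lemma map_zip_fst: "length qs = length ps \<Longrightarrow> map (\<lambda>(x,y). g x) (zip ps qs) = map g ps"
  by (induction ps qs rule: list_induct2') auto

lemma D_swap: "image_mset prod.swap (D T) = D T"
proof (induction T)
  case (Leaf x) then show ?case by simp
next
  case (Node ts)
  have "image_mset prod.swap (D (Node ts)) = image_mset (\<lambda>ps. vp (map prod.swap ps)) (lprod (map D ts))"
    by (simp add: multiset.map_comp o_def vp_def)
  also have "\<dots> = image_mset vp (image_mset (map2 (\<lambda>_. prod.swap) ts) (lprod (map D ts)))"
    by (simp add: multiset.map_comp o_def, rule image_mset_cong) (simp add: in_lprod map2_snd)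
  also have "\<dots> = image_mset vp (lprod (map (\<lambda>t. image_mset prod.swap (D t)) ts))"
    by (simp only: lprod_image)
  also have "\<dots> = D (Node ts)" using Node by (simp cong: map_cong)
  finally show ?case .
qed

definition nu :: "'x tree \<Rightarrow> bool" where "nu t \<longleftrightarrow> t \<noteq> Node []"

definition w :: "('x tree \<times> 'x tree) list \<Rightarrow> 'x tree list \<times> 'x tree list" where
  "w ps = (filter nu (map fst ps), filter nu (map snd ps))"

definition cw :: "'x tree \<times> 'x tree \<Rightarrow> 'x tree list \<times> 'x tree list \<Rightarrow> 'x tree list \<times> 'x tree list" where
  "cw x r = (filter nu [fst x] @ fst r, filter nu [snd x] @ snd r)"

lemma w_Cons: "w (x # xs) = cw x (w xs)" by (simp add: w_def cw_def)

lemma vee_mono_single: "vee_mono [a] = a"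
  by (simp add: vee_mono_def)

lemma vee_mono_filter: "vee_mono (filter nu ts) = vee_mono ts"
  by (simp add: vee_mono_def nu_def)

lemma vp_w: "vp ps = map_prod vee_mono vee_mono (w ps)"
  by (simp add: vp_def w_def vee_mono_filter)

lemma W: "image_mset w (lprod (map D ss)) = image_mset w (lprod (map D (filter nu ss)))"
proof (induction ss)
  case Nil then show ?case by simp
next
  case (Cons s ss)
  show ?case
  proof (cases "nu s")
    case False
    then have "s = Node []" by (simp add: nu_def)
    then have "image_mset w (lprod (map D (s # ss))) = image_mset w (lprod (map D ss))"
      by (simp add: vp_def vee_mono_def multiset.map_comp o_def w_def[abs_def] nu_def)
    then show ?thesis using Cons False by simp
  next
    case True
    have "image_mset w (lprod (map D (s # ss))) = mbind (D s) (\<lambda>x. image_mset (cw x) (image_mset w (lprod (map D ss))))"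
      by (simp add: image_mbind multiset.map_comp o_def w_Cons)
    also have "\<dots> = mbind (D s) (\<lambda>x. image_mset (cw x) (image_mset w (lprod (map D (filter nu ss)))))"
      using Cons by simp
    also have "\<dots> = image_mset w (lprod (map D (filter nu (s # ss))))"
      using True by (simp add: image_mbind multiset.map_comp o_def w_Cons)
    finally show ?thesis .
  qed
qed


lemma vee_mono_nu: "\<forall>u\<in>set us. nu u \<Longrightarrow> 2 \<le> length us \<Longrightarrow> vee_mono us = Node us"
proof -
  assume a: "\<forall>u\<in>set us. nu u" and l: "2 \<le> length us"
  have f: "filter (\<lambda>t. t \<noteq> Node []) us = us" using a by (simp add: filter_id_conv nu_def)
  obtain a b r where "us = a # b # r" using l by (metis One_nat_def Suc_1 Suc_le_length_iff)
  then show ?thesis using f by (simp add: vee_mono_def Let_def)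
qed

lemma D_hom_nu: "\<forall>u\<in>set us. nu u \<Longrightarrow> D (vee_mono us) = image_mset vp (lprod (map D us))"
proof (cases us)
  case Nil
  then show ?thesis by (simp add: vee_mono_def vp_def)
next
  case (Cons u us')
  assume a: "\<forall>u\<in>set us. nu u"
  show ?thesis
  proof (cases us')
    case Nil
    have "image_mset vp (lprod (map D us)) = image_mset (\<lambda>x. vp [x]) (D u)"
      using Cons Nil by (simp add: image_mbind mbind_singleton_fun multiset.map_comp o_def)
    also have "\<dots> = D u" by (simp add: vp_def vee_mono_single)
    finally show ?thesis using Cons Nil by (simp add: vee_mono_single)
  next
    case (Cons u2 us'')
    then have "vee_mono us = Node us" using vee_mono_nu[of us] a \<open>us = u # us'\<close> by simp
    then show ?thesis by simp
  qed
qed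

lemma D_hom: "D (vee_mono ss) = image_mset vp (lprod (map D ss))"
proof -
  let ?us = "filter nu ss"
  have vpc: "vp = map_prod vee_mono vee_mono \<circ> w" by (rule ext) (simp add: vp_w)
  have "image_mset vp (lprod (map D ss)) = image_mset (map_prod vee_mono vee_mono) (image_mset w (lprod (map D ss)))"
    by (simp only: vpc multiset.map_comp)
  also have "\<dots> = image_mset vp (lprod (map D ?us))"
    by (subst W) (simp only: vpc multiset.map_comp)
  also have "\<dots> = D (vee_mono ?us)"
    by (rule D_hom_nu[symmetric]) simp
  also have "\<dots> = D (vee_mono ss)" by (simp only: vee_mono_filter)
  finally show ?thesis by simp
qed



definition L3 :: "'x tree \<Rightarrow> ('x tree \<times> 'x tree \<times> 'x tree) multiset" where
  "L3 T = mbind (D T) (\<lambda>(S,C). image_mset (\<lambda>(A,B). (A,B,C)) (D S))"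
definition R3 :: "'x tree \<Rightarrow> ('x tree \<times> 'x tree \<times> 'x tree) multiset" where
  "R3 T = mbind (D T) (\<lambda>(A,U). image_mset (\<lambda>(B,C). (A,B,C)) (D U))"
definition vp3 :: "('x tree \<times> 'x tree \<times> 'x tree) list \<Rightarrow> 'x tree \<times> 'x tree \<times> 'x tree" where
  "vp3 xs = (vee_mono (map fst xs), vee_mono (map (fst \<circ> snd) xs), vee_mono (map (snd \<circ> snd) xs))"

lemma L3_Node: "L3 (Node ts) = image_mset vp3 (lprod (map L3 ts))"
proof -
  define F :: "'a tree \<times> 'a tree \<Rightarrow> ('a tree \<times> 'a tree \<times> 'a tree) multiset"
    where "F = (\<lambda>(S,C). image_mset (\<lambda>(A,B). (A,B,C)) (D S))"
  have F': "F = (\<lambda>x. image_mset ((\<lambda>x (A,B). (A,B,snd x)) x) ((\<lambda>x. D (fst x)) x))"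
    by (auto simp: F_def fun_eq_iff)
  have "L3 (Node ts) = mbind (lprod (map D ts)) (\<lambda>ps. F (vp ps))"
    by (simp add: L3_def F_def mbind_image)
  also have "\<dots> = mbind (lprod (map D ts)) (\<lambda>ps. image_mset vp3 (lprod (map F ps)))"
  proof (rule mbind_cong)
    fix ps assume "ps \<in># lprod (map D ts)"
    have "image_mset vp3 (lprod (map F ps))
        = image_mset vp3 (image_mset (map2 (\<lambda>x (A,B). (A,B,snd x)) ps) (lprod (map (\<lambda>x. D (fst x)) ps)))"
      by (simp only: F' lprod_image)
    also have "\<dots> = image_mset (\<lambda>(A,B). (A,B,vee_mono (map snd ps))) (image_mset vp (lprod (map D (map fst ps))))"
      by (simp add: multiset.map_comp o_def, rule image_mset_cong)
         (auto simp: in_lprod vp3_def vp_def split_def intro!: arg_cong[where f=vee_mono] nth_equalityI)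
    also have "\<dots> = F (vp ps)"
      by (simp add: F_def vp_def D_hom)
    finally show "F (vp ps) = image_mset vp3 (lprod (map F ps))" by simp
  qed
  also have "\<dots> = image_mset vp3 (lprod (map L3 ts))"
  proof -
    have "map L3 ts = map (\<lambda>t. mbind (D t) F) ts" by (simp add: L3_def F_def)
    then show ?thesis by (simp only: lprod_mbind image_mbind)
  qed
  finally show ?thesis .
qed

lemma R3_Node: "R3 (Node ts) = image_mset vp3 (lprod (map R3 ts))"
proof -
  define F :: "'a tree \<times> 'a tree \<Rightarrow> ('a tree \<times> 'a tree \<times> 'a tree) multiset"
    where "F = (\<lambda>(A,U). image_mset (\<lambda>(B,C). (A,B,C)) (D U))"
  have F': "F = (\<lambda>x. image_mset ((\<lambda>x (B,C). (fst x,B,C)) x) ((\<lambda>x. D (snd x)) x))"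
    by (auto simp: F_def fun_eq_iff)
  have "R3 (Node ts) = mbind (lprod (map D ts)) (\<lambda>ps. F (vp ps))"
    by (simp add: R3_def F_def mbind_image)
  also have "\<dots> = mbind (lprod (map D ts)) (\<lambda>ps. image_mset vp3 (lprod (map F ps)))"
  proof (rule mbind_cong)
    fix ps assume "ps \<in># lprod (map D ts)"
    have "image_mset vp3 (lprod (map F ps))
        = image_mset vp3 (image_mset (map2 (\<lambda>x (B,C). (fst x,B,C)) ps) (lprod (map (\<lambda>x. D (snd x)) ps)))"
      by (simp only: F' lprod_image)
    also have "\<dots> = image_mset (\<lambda>(B,C). (vee_mono (map fst ps),B,C)) (image_mset vp (lprod (map D (map snd ps))))"
      by (simp add: multiset.map_comp o_def, rule image_mset_cong)
         (auto simp: in_lprod vp3_def vp_def split_def intro!: arg_cong[where f=vee_mono] nth_equalityI)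
    also have "\<dots> = F (vp ps)"
      by (simp add: F_def vp_def D_hom)
    finally show "F (vp ps) = image_mset vp3 (lprod (map F ps))" by simp
  qed
  also have "\<dots> = image_mset vp3 (lprod (map R3 ts))"
  proof -
    have "map R3 ts = map (\<lambda>t. mbind (D t) F) ts" by (simp add: R3_def F_def)
    then show ?thesis by (simp only: lprod_mbind image_mbind)
  qed
  finally show ?thesis .
qed

lemma coassoc: "L3 T = R3 T"
proof (induction T)
  case (Leaf x)
  show ?case by (simp add: L3_def R3_def vp_def vee_mono_def add_mset_commute)
next
  case (Node ts)
  then have "map L3 ts = map R3 ts" by simp
  then show ?case by (simp only: L3_Node R3_Node)
qed



fun rr :: "nat list \<Rightarrow> 'x tree \<Rightarrow> nat list set \<Rightarrow> 'x tree"
and rrs :: "nat list \<Rightarrow> nat \<Rightarrow> 'x tree list \<Rightarrow> nat list set \<Rightarrow> 'x tree list" where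
  "rr p (Leaf x) I = (if p \<in> I then Leaf x else Node [])"
| "rr p (Node ts) I = vee_mono (rrs p 0 ts I)"
| "rrs p i [] I = []"
| "rrs p i (t # ts) I = rr (p @ [i]) t I # rrs p (Suc i) ts I"

lemma red_ne: "red (Node (c1 # c2 # cs)) \<noteq> Node []" by simp

lemma link:
  fixes T :: "'x tree" and ts :: "'x tree list"
  shows "(restr p T I = None \<longrightarrow> rr p T I = Node []) \<and> (\<forall>s. restr p T I = Some s \<longrightarrow> rr p T I = red s \<and> red s \<noteq> Node [])"
  and "filter nu (rrs p i ts I) = map red (restrs p i ts I) \<and> (\<forall>s\<in>set (restrs p i ts I). red s \<noteq> Node [])"
proof (induction p T I and p i ts I rule: restr_restrs.induct)
  case (1 p x I)
  then show ?case by auto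
next
  case (2 p ts I)
  have v: "rr p (Node ts) I = vee_mono (map red (restrs p 0 ts I))"
  proof -
    have "rr p (Node ts) I = vee_mono (filter nu (rrs p 0 ts I))" by (simp only: vee_mono_filter rr.simps)
    then show ?thesis using 2 by simp
  qed
  show ?case
  proof (cases "restrs p 0 ts I")
    case Nil then show ?thesis using v by (simp add: vee_mono_def)
  next
    case (Cons c cs)
    then show ?thesis using v 2 by (cases cs) (auto simp: vee_mono_def nu_def filter_id_conv)
  qed
next
  case (3 p i I)
  then show ?case by simp
next
  case (4 p i t ts I)
  then show ?case by (auto split: option.splits simp: nu_def)
qed

lemma red_leaf_restrict: "red (leaf_restrict T I) = rr [] T I"
  using link(1)[of "[]" T I] by (cases "restr [] T I") (auto simp: leaf_restrict_def)

lemma rrs_length: "length (rrs p i ts I) = length ts"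
  by (induction ts arbitrary: i) auto

lemma rrs_nth_el: "j < length ts \<Longrightarrow> rrs p i ts I ! j = rr (p @ [i + j]) (ts ! j) I"
proof (induction ts arbitrary: i j)
  case Nil then show ?case by simp
next
  case (Cons t ts)
  show ?case
  proof (cases j)
    case 0 then show ?thesis by simp
  next
    case (Suc j') then show ?thesis using Cons by simp
  qed
qed

lemma rrs_nth: "rrs p i ts I = map (\<lambda>j. rr (p @ [i + j]) (ts ! j) I) [0..<length ts]"
  by (rule nth_equalityI) (auto simp: rrs_length rrs_nth_el)

lemma rr_Node_nth: "rr p (Node ts) I = vee_mono (map (\<lambda>j. rr (p @ [j]) (ts ! j) I) [0..<length ts])"
  by (simp add: rrs_nth)

lemma Le_Leaf: "Le (Leaf x) = {[]}"
proof (rule set_eqI)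
  fix p show "p \<in> Le (Leaf x) \<longleftrightarrow> p \<in> {[]}" by (cases p) (auto simp: Le_def)
qed

lemma Le_Node: "Le (Node ts) = {i # q | i q. i < length ts \<and> q \<in> Le (ts ! i)}"
proof (rule set_eqI)
  fix p show "p \<in> Le (Node ts) \<longleftrightarrow> p \<in> {i # q | i q. i < length ts \<and> q \<in> Le (ts ! i)}"
    by (cases p) (auto simp: Le_def)
qed

lemma finite_Le: "finite (Le T)"
proof (induction T)
  case (Leaf x) then show ?case by (simp add: Le_Leaf)
next
  case (Node ts)
  have "Le (Node ts) \<subseteq> (\<Union>i<length ts. (\<lambda>q. i # q) ` Le (ts ! i))"
    by (auto simp: Le_Node)
  moreover have "finite (\<Union>i<length ts. (\<lambda>q. i # q) ` Le (ts ! i))"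
    using Node by auto
  ultimately show ?case by (rule finite_subset)
qed

definition Lp :: "nat list \<Rightarrow> 'x tree \<Rightarrow> nat list set" where
  "Lp p T = (\<lambda>q. p @ q) ` Le T"

lemma Lp_Leaf: "Lp p (Leaf x) = {p}" by (simp add: Lp_def Le_Leaf)

lemma Lp_Node: "Lp p (Node ts) = (\<Union>i<length ts. Lp (p @ [i]) (ts ! i))"
  by (auto simp: Lp_def Le_Node)

lemma finite_Lp: "finite (Lp p T)" by (simp add: Lp_def finite_Le)

lemma Lp_nil: "Lp [] T = Le T" by (simp add: Lp_def)

lemma Lp_disj: "q \<in> Lp (p @ [i]) t \<Longrightarrow> q \<in> Lp (p @ [j]) t' \<Longrightarrow> i = j"
  by (auto simp: Lp_def)

lemma rr_local: "I \<inter> Lp p T = J \<inter> Lp p T \<Longrightarrow> rr p T I = rr p T J"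
proof (induction T arbitrary: p)
  case (Leaf x)
  then show ?case by (auto simp: Lp_Leaf)
next
  case (Node ts)
  have "rr (p @ [j]) (ts ! j) I = rr (p @ [j]) (ts ! j) J" if "j < length ts" for j
  proof (rule Node.IH)
    show "ts ! j \<in> set ts" using that by simp
    have "Lp (p @ [j]) (ts ! j) \<subseteq> Lp p (Node ts)" using that by (auto simp: Lp_Node)
    then show "I \<inter> Lp (p @ [j]) (ts ! j) = J \<inter> Lp (p @ [j]) (ts ! j)" using Node.prems by blast
  qed
  then have "map (\<lambda>j. rr (p @ [j]) (ts ! j) I) [0..<length ts] = map (\<lambda>j. rr (p @ [j]) (ts ! j) J) [0..<length ts]"
    by (intro map_cong) auto
  then show ?case by (simp only: rr_Node_nth)
qed

lemma in_mset_setD: "x \<in># mset_set A \<Longrightarrow> x \<in> A"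
  by (cases "finite A") auto

lemma D_Pow: "D T = image_mset (\<lambda>I. (rr p T I, rr p T (Lp p T - I))) (mset_set (Pow (Lp p T)))"
proof (induction T arbitrary: p)
  case (Leaf x)
  have "Pow {p} = {{}, {p}}" by auto
  then show ?case by (simp add: Lp_Leaf)
next
  case (Node ts)
  define k where "k = length ts"
  define Li where "Li = (\<lambda>i. Lp (p @ [i]) (ts ! i))"
  define G where "G = (\<lambda>i I. (rr (p @ [i]) (ts ! i) I, rr (p @ [i]) (ts ! i) (Li i - I)))"
  define LS where "LS = {xs. length xs = length (map (\<lambda>i. Pow (Li i)) [0..<k])
                    \<and> (\<forall>i<length (map (\<lambda>i. Pow (Li i)) [0..<k]). xs ! i \<in> map (\<lambda>i. Pow (Li i)) [0..<k] ! i)}"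
  define U :: "nat list set list \<Rightarrow> nat list set" where "U = (\<lambda>xs. \<Union>i<k. xs ! i)"
  define L where "L = Lp p (Node ts)"
  have L: "L = (\<Union>i<k. Li i)" by (simp add: L_def Lp_Node k_def Li_def)
  have LS: "LS = {xs. length xs = k \<and> (\<forall>i<k. xs ! i \<subseteq> Li i)}" by (auto simp: LS_def)
  have mD: "map D ts = map (\<lambda>i. image_mset (G i) (mset_set (Pow (Li i)))) [0..<k]"
    by (rule nth_equalityI) (auto simp: k_def G_def Li_def Node.IH)
  have "D (Node ts) = image_mset vp (lprod (map (\<lambda>i. image_mset (G i) (mset_set (Pow (Li i)))) [0..<k]))"
    by (simp only: D.simps mD)
  also have "\<dots> = image_mset vp (image_mset (map2 G [0..<k]) (lprod (map (\<lambda>i. mset_set (Pow (Li i))) [0..<k])))"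
    by (simp only: lprod_image)
  also have "lprod (map (\<lambda>i. mset_set (Pow (Li i))) [0..<k]) = mset_set LS"
  proof -
    have "map (\<lambda>i. mset_set (Pow (Li i))) [0..<k] = map mset_set (map (\<lambda>i. Pow (Li i)) [0..<k])" by simp
    then show ?thesis unfolding LS_def
      by (simp only:) (rule lprod_mset_set, auto simp: Li_def finite_Lp)
  qed
  finally have D1: "D (Node ts) = image_mset (\<lambda>xs. vp (map2 G [0..<k] xs)) (mset_set LS)"
    by (simp add: multiset.map_comp o_def)
  have sub: "xs \<in> LS \<Longrightarrow> i < k \<Longrightarrow> U xs \<inter> Li i = xs ! i" for xs i
    unfolding LS U_def Li_def using Lp_disj by blast
  have sub2: "xs \<in> LS \<Longrightarrow> i < k \<Longrightarrow> (L - U xs) \<inter> Li i = (Li i - xs ! i) \<inter> Li i" for xs i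
    using sub[of xs i] unfolding L by blast
  have inj: "inj_on U LS"
  proof (rule inj_onI)
    fix xs ys assume a: "xs \<in> LS" "ys \<in> LS" "U xs = U ys"
    show "xs = ys"
    proof (rule nth_equalityI)
      show "length xs = length ys" using a by (simp add: LS)
      fix i assume "i < length xs"
      then have "i < k" using a by (simp add: LS)
      then show "xs ! i = ys ! i" using sub[OF a(1)] sub[OF a(2)] a(3) by metis
    qed
  qed
  have img: "U ` LS = Pow L"
  proof
    show "U ` LS \<subseteq> Pow L" unfolding L U_def LS by auto
    show "Pow L \<subseteq> U ` LS"
    proof
      fix I assume "I \<in> Pow L"
      then have "I = U (map (\<lambda>i. I \<inter> Li i) [0..<k])" unfolding U_def L by auto
      moreover have "map (\<lambda>i. I \<inter> Li i) [0..<k] \<in> LS" unfolding LS by auto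
      ultimately show "I \<in> U ` LS" by blast
    qed
  qed
  have "image_mset (\<lambda>I. (rr p (Node ts) I, rr p (Node ts) (L - I))) (mset_set (Pow L))
      = image_mset (\<lambda>I. (rr p (Node ts) I, rr p (Node ts) (L - I))) (image_mset U (mset_set LS))"
    by (simp add: image_mset_mset_set[OF inj] img)
  also have "\<dots> = image_mset (\<lambda>xs. vp (map2 G [0..<k] xs)) (mset_set LS)"
    unfolding multiset.map_comp o_def
  proof (rule image_mset_cong)
    fix xs assume "xs \<in># mset_set LS"
    then have xs: "xs \<in> LS" by (rule in_mset_setD)
    then have len: "length xs = k" by (simp add: LS)
    have r1: "rr (p @ [j]) (ts ! j) (U xs) = rr (p @ [j]) (ts ! j) (xs ! j)" if "j < k" for j
      by (rule rr_local) (use sub[OF xs that] in \<open>auto simp: Li_def\<close>)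
    have r2: "rr (p @ [j]) (ts ! j) (L - U xs) = rr (p @ [j]) (ts ! j) (Li j - xs ! j)" if "j < k" for j
      by (rule rr_local) (use sub2[OF xs that] in \<open>auto simp: Li_def\<close>)
    have e1: "map (\<lambda>j. rr (p @ [j]) (ts ! j) (U xs)) [0..<k] = map fst (map2 G [0..<k] xs)"
      by (rule nth_equalityI) (auto simp: len G_def r1)
    have e2: "map (\<lambda>j. rr (p @ [j]) (ts ! j) (L - U xs)) [0..<k] = map snd (map2 G [0..<k] xs)"
      by (rule nth_equalityI) (auto simp: len G_def r2)
    show "(rr p (Node ts) (U xs), rr p (Node ts) (L - U xs)) = vp (map2 G [0..<k] xs)"
      unfolding rr_Node_nth vp_def k_def[symmetric] e1 e2 ..
  qed
  finally show ?case using D1 by (simp add: L_def)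
qed

lemma count_D: "count (D T) (A, B) = card (shuffle_sets T A B)"
proof -
  have "count (D T) (A, B) = card ((\<lambda>I. (rr [] T I, rr [] T (Le T - I))) -` {(A, B)} \<inter> Pow (Le T))"
    by (subst D_Pow[where p = "[]"]) (simp add: count_image_mset Lp_nil finite_Le)
  also have "(\<lambda>I. (rr [] T I, rr [] T (Le T - I))) -` {(A, B)} \<inter> Pow (Le T) = shuffle_sets T A B"
    by (auto simp: shuffle_sets_def red_leaf_restrict)
  finally show ?thesis .
qed



fun nl :: "'x tree \<Rightarrow> nat" where
  "nl (Leaf x) = 1"
| "nl (Node ts) = sum_list (map nl ts)"

fun sz :: "'x tree \<Rightarrow> nat" where
  "sz (Leaf x) = 1"
| "sz (Node ts) = Suc (sum_list (map sz ts))"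

lemma sz_pos: "1 \<le> sz T" by (cases T) auto

lemma finite_set_tree': "finite (set_tree T)"
  by (induction T) auto

lemma vee_mono_case: "vee_mono ts = (case filter (\<lambda>t. t \<noteq> Node []) ts of [] \<Rightarrow> Node [] | [u] \<Rightarrow> u | _ \<Rightarrow> Node (filter (\<lambda>t. t \<noteq> Node []) ts))"
  by (simp add: vee_mono_def Let_def)

lemma nl_case: "nl (case us of [] \<Rightarrow> Node [] | [u] \<Rightarrow> u | _ \<Rightarrow> Node us) = sum_list (map nl us)"
  by (cases us rule: remdups_adj.cases) auto

lemma set_tree_case: "set_tree (case us of [] \<Rightarrow> Node [] | [u] \<Rightarrow> u | _ \<Rightarrow> Node us) = (\<Union>t\<in>set us. set_tree t)"
  by (cases us rule: remdups_adj.cases) auto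

lemma nl_vee: "nl (vee_mono ts) = sum_list (map nl ts)"
proof -
  have "sum_list (map nl (filter (\<lambda>t. t \<noteq> Node []) ts)) = sum_list (map nl ts)"
    by (rule sum_list_map_filter) auto
  then show ?thesis by (simp only: vee_mono_case nl_case)
qed

lemma set_tree_vee: "set_tree (vee_mono ts) = (\<Union>t\<in>set ts. set_tree t)"
proof -
  have "(\<Union>t\<in>set (filter (\<lambda>t. t \<noteq> Node []) ts). set_tree t) = (\<Union>t\<in>set ts. set_tree t)" by auto
  then show ?thesis by (simp only: vee_mono_case set_tree_case)
qed

lemma lprod_D_props:
  "ps \<in># lprod (map D ts) \<Longrightarrow>
   (\<And>t a b. t \<in> set ts \<Longrightarrow> (a,b) \<in># D t \<Longrightarrow> nl a + nl b = nl t \<and> set_tree t \<subseteq> set_tree a \<union> set_tree b) \<Longrightarrow>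
   sum_list (map nl (map fst ps)) + sum_list (map nl (map snd ps)) = sum_list (map nl ts)
   \<and> (\<Union>t\<in>set ts. set_tree t) \<subseteq> (\<Union>x\<in>set ps. set_tree (fst x) \<union> set_tree (snd x))"
proof (induction ts arbitrary: ps)
  case Nil then show ?case by simp
next
  case (Cons t ts)
  from Cons.prems(1) obtain y ys where y: "ps = y # ys" "y \<in># D t" "ys \<in># lprod (map D ts)"
    by (auto simp only: list.map in_lprod_Cons)
  have h: "nl (fst y) + nl (snd y) = nl t \<and> set_tree t \<subseteq> set_tree (fst y) \<union> set_tree (snd y)"
    using Cons.prems(2)[of t "fst y" "snd y"] y(2) by simp
  have "(\<And>t' a b. t' \<in> set ts \<Longrightarrow> (a,b) \<in># D t' \<Longrightarrow> nl a + nl b = nl t' \<and> set_tree t' \<subseteq> set_tree a \<union> set_tree b)"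
    using Cons.prems(2) by simp
  note IH = Cons.IH[OF y(3) this]
  show ?case using h IH y(1) by auto
qed

lemma D_props: "(A, B) \<in># D T \<Longrightarrow> nl A + nl B = nl T \<and> set_tree T \<subseteq> set_tree A \<union> set_tree B"
proof (induction T arbitrary: A B)
  case (Leaf x) then show ?case by auto
next
  case (Node ts)
  from Node.prems obtain ps where ps: "ps \<in># lprod (map D ts)" "vp ps = (A, B)" by auto
  have "sum_list (map nl (map fst ps)) + sum_list (map nl (map snd ps)) = sum_list (map nl ts)
   \<and> (\<Union>t\<in>set ts. set_tree t) \<subseteq> (\<Union>x\<in>set ps. set_tree (fst x) \<union> set_tree (snd x))"
    by (rule lprod_D_props[OF ps(1)]) (use Node.IH in blast)
  then have h1: "sum_list (map nl (map fst ps)) + sum_list (map nl (map snd ps)) = sum_list (map nl ts)"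
    and h2: "(\<Union>t\<in>set ts. set_tree t) \<subseteq> (\<Union>x\<in>set ps. set_tree (fst x) \<union> set_tree (snd x))" by blast+
  have AB: "A = vee_mono (map fst ps)" "B = vee_mono (map snd ps)" using ps(2) by (auto simp: vp_def)
  have "nl A + nl B = nl (Node ts)" using h1 by (simp only: AB nl_vee nl.simps)
  moreover have "set_tree (Node ts) \<subseteq> set_tree A \<union> set_tree B"
  proof -
    have "set_tree A \<union> set_tree B = (\<Union>x\<in>set ps. set_tree (fst x) \<union> set_tree (snd x))"
      by (simp only: AB set_tree_vee) auto
    then show ?thesis using h2 by simp
  qed
  ultimately show ?case by blast
qed

lemma sz_reduced: "reduced T \<Longrightarrow> sz T + 1 \<le> 2 * nl T"
proof (induction T)
  case (Leaf x) then show ?case by simp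
next
  case (Node ts)
  have "sum_list (map (\<lambda>t. sz t + 1) ts) \<le> sum_list (map (\<lambda>t. 2 * nl t) ts)"
    using Node by (intro sum_list_mono) auto
  moreover have "sum_list (map (\<lambda>t. sz t + 1) ts) = sum_list (map sz ts) + length ts"
    by (induction ts) auto
  moreover have "sum_list (map (\<lambda>t. 2 * nl t) ts) = 2 * sum_list (map nl ts)"
    by (induction ts) auto
  moreover have "2 \<le> length ts" using Node.prems by simp
  ultimately show ?case by simp
qed

lemma sz_mono: "is_mono T \<Longrightarrow> sz T \<le> 2 * nl T + 1"
  using sz_reduced[of T] by (auto simp: is_mono_def)

lemma nl_reduced: "reduced T \<Longrightarrow> 1 \<le> nl T"
proof (induction T)
  case (Leaf x) then show ?case by simp
next
  case (Node ts)
  then obtain t where "t \<in> set ts" by (cases ts) auto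
  then have "1 \<le> nl t" "nl t \<le> sum_list (map nl ts)" using Node by (auto intro: member_le_sum_list)
  then show ?case by simp
qed

lemma finite_trees: "finite X \<Longrightarrow> finite {T. sz T \<le> n \<and> set_tree T \<subseteq> X}"
proof (induction n)
  case 0
  have "{T. sz T \<le> 0 \<and> set_tree T \<subseteq> X} = {}"
  proof (rule equals0I)
    fix T assume "T \<in> {T. sz T \<le> 0 \<and> set_tree T \<subseteq> X}"
    then show False using sz_pos[of T] by simp
  qed
  then show ?case by (metis finite.emptyI)
next
  case (Suc n)
  let ?A = "{T. sz T \<le> n \<and> set_tree T \<subseteq> X}"
  have "{T. sz T \<le> Suc n \<and> set_tree T \<subseteq> X} \<subseteq> Leaf ` X \<union> Node ` {ts. set ts \<subseteq> ?A \<and> length ts \<le> n}"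
  proof
    fix T assume T: "T \<in> {T. sz T \<le> Suc n \<and> set_tree T \<subseteq> X}"
    show "T \<in> Leaf ` X \<union> Node ` {ts. set ts \<subseteq> ?A \<and> length ts \<le> n}"
    proof (cases T)
      case (Leaf x) then show ?thesis using T by auto
    next
      case (Node ts)
      then have s: "sum_list (map sz ts) \<le> n" using T by simp
      have "sz t \<le> n" if "t \<in> set ts" for t
        using member_le_sum_list[of "sz t" "map sz ts"] that s by auto
      moreover have "length ts \<le> sum_list (map sz ts)"
      proof -
        have "sum_list (map (\<lambda>t. 1) ts) \<le> sum_list (map sz ts)" by (rule sum_list_mono) (rule sz_pos)
        then show ?thesis by (simp add: sum_list_triv)
      qed
      ultimately have "ts \<in> {ts. set ts \<subseteq> ?A \<and> length ts \<le> n}" using T Node s by auto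
      then show ?thesis using Node by blast
    qed
  qed
  moreover have "finite (Leaf ` X \<union> Node ` {ts. set ts \<subseteq> ?A \<and> length ts \<le> n})"
    using Suc by (simp add: finite_lists_length_le)
  ultimately show ?case by (rule finite_subset)
qed

lemma mono_vee: "(\<forall>t\<in>set ts. is_mono t) \<Longrightarrow> is_mono (vee_mono ts)"
proof -
  assume a: "\<forall>t\<in>set ts. is_mono t"
  let ?us = "filter (\<lambda>t. t \<noteq> Node []) ts"
  have r: "\<forall>u\<in>set ?us. reduced u" using a by (auto simp: is_mono_def)
  show ?thesis
  proof (cases ?us rule: remdups_adj.cases)
    case 1 then show ?thesis by (simp add: vee_mono_case is_mono_def)
  next
    case (2 x) then show ?thesis using r by (simp add: vee_mono_case is_mono_def)
  next
    case (3 x y xs) then show ?thesis using r by (simp add: vee_mono_case is_mono_def)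
  qed
qed

lemma D_mono: "is_mono T \<Longrightarrow> (A, B) \<in># D T \<Longrightarrow> is_mono A \<and> is_mono B"
proof (induction T arbitrary: A B)
  case (Leaf x) then show ?case by (auto simp: is_mono_def)
next
  case (Node ts)
  from Node.prems obtain ps where ps: "ps \<in># lprod (map D ts)" "vp ps = (A, B)" by auto
  have mt: "\<forall>t\<in>set ts. is_mono t" using Node.prems(1) by (auto simp: is_mono_def)
  have "is_mono (fst (ps ! i)) \<and> is_mono (snd (ps ! i))" if "i < length ps" for i
  proof -
    have "i < length ts" "ps ! i \<in># D (ts ! i)" using ps(1) that by (auto simp: in_lprod)
    then show ?thesis using Node.IH[of "ts ! i" "fst (ps ! i)" "snd (ps ! i)"] mt by simp
  qed
  then have "\<forall>x\<in>set ps. is_mono (fst x) \<and> is_mono (snd x)" by (metis in_set_conv_nth)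
  then have "\<forall>t\<in>set (map fst ps). is_mono t" "\<forall>t\<in>set (map snd ps). is_mono t"
    by auto
  then show ?case using ps(2) by (auto simp: vp_def intro!: mono_vee)
qed

lemma finite_D_inv: "finite {T. is_mono T \<and> (A, B) \<in># D T}"
proof -
  have "{T. is_mono T \<and> (A, B) \<in># D T} \<subseteq> {T. sz T \<le> 2 * (nl A + nl B) + 1 \<and> set_tree T \<subseteq> set_tree A \<union> set_tree B}"
    using D_props sz_mono by fastforce
  then show ?thesis by (rule finite_subset) (simp add: finite_trees finite_set_tree')
qed

lemma shuffle_eq:
  "(shuffle g1 g2 :: _ \<Rightarrow> 'k::{comm_ring_1,ring_char_0}) T
     = (if is_mono T then (\<Sum>P\<in>#D T. g1 (fst P) * g2 (snd P)) else 0)"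
proof (cases "is_mono T")
  case False then show ?thesis by (simp add: shuffle_def)
next
  case True
  have sD: "supp (\<lambda>P. of_nat (count (D T) P) :: 'k) = set_mset (D T)"
    by (auto simp: supp_def Delta_m_D)
  have "(shuffle g1 g2 :: _ \<Rightarrow> 'k) T = (\<Sum>P\<in>supp (tensor g1 g2) \<inter> set_mset (D T). tensor g1 g2 P * of_nat (count (D T) P))"
    using True by (simp add: shuffle_def pair2_def sD Delta_m_D)
  also have "\<dots> = (\<Sum>P\<in>set_mset (D T). of_nat (count (D T) P) * tensor g1 g2 P)"
    by (rule sum.mono_neutral_cong_left) (auto simp: supp_def)
  also have "\<dots> = (\<Sum>P\<in>#D T. tensor g1 g2 P)"
    by (rule sum_mset_as_sum[symmetric]) auto
  also have "\<dots> = (\<Sum>P\<in>#D T. g1 (fst P) * g2 (snd P))"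
    by (simp add: tensor_def split_def)
  finally show ?thesis using True by simp
qed



lemma sum_mset_mbind: "(\<Sum>x\<in>#mbind M h. f x) = (\<Sum>y\<in>#M. \<Sum>x\<in>#h y. f x)"
  by (induction M) auto

lemma shuffle_assoc:
  "shuffle (shuffle g1 g2) g3 = (shuffle g1 (shuffle g2 g3) :: _ \<Rightarrow> 'k::{comm_ring_1,ring_char_0})"
proof (rule ext)
  fix T
  show "shuffle (shuffle g1 g2) g3 T = (shuffle g1 (shuffle g2 g3) :: _ \<Rightarrow> 'k) T"
  proof (cases "is_mono T")
    case False then show ?thesis by (simp add: shuffle_def)
  next
    case True
    let ?f = "\<lambda>x. g1 (fst x) * g2 (fst (snd x)) * g3 (snd (snd x))"
    have "shuffle (shuffle g1 g2) g3 T = (\<Sum>P\<in>#D T. shuffle g1 g2 (fst P) * g3 (snd P))"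
      using True by (subst shuffle_eq) simp
    also have "\<dots> = (\<Sum>P\<in>#D T. (\<Sum>Q\<in>#D (fst P). g1 (fst Q) * g2 (snd Q)) * g3 (snd P))"
    proof (rule arg_cong[where f = sum_mset], rule image_mset_cong)
      fix P assume "P \<in># D T"
      then have "is_mono (fst P)" using D_mono[OF True, of "fst P" "snd P"] by simp
      then show "shuffle g1 g2 (fst P) * g3 (snd P) = (\<Sum>Q\<in>#D (fst P). g1 (fst Q) * g2 (snd Q)) * g3 (snd P)"
        by (simp add: shuffle_eq)
    qed
    also have "\<dots> = (\<Sum>x\<in>#L3 T. ?f x)"
      by (simp add: L3_def sum_mset_mbind sum_mset_distrib_right split_def multiset.map_comp o_def)
    also have "\<dots> = (\<Sum>x\<in>#R3 T. ?f x)" by (simp only: coassoc)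
    also have "\<dots> = (\<Sum>P\<in>#D T. g1 (fst P) * (\<Sum>Q\<in>#D (snd P). g2 (fst Q) * g3 (snd Q)))"
      by (simp add: R3_def sum_mset_mbind sum_mset_distrib_left split_def multiset.map_comp o_def mult.assoc)
    also have "\<dots> = (\<Sum>P\<in>#D T. g1 (fst P) * shuffle g2 g3 (snd P))"
    proof (rule arg_cong[where f = sum_mset], rule image_mset_cong)
      fix P assume "P \<in># D T"
      then have "is_mono (snd P)" using D_mono[OF True, of "fst P" "snd P"] by simp
      then show "g1 (fst P) * (\<Sum>Q\<in>#D (snd P). g2 (fst Q) * g3 (snd Q)) = g1 (fst P) * shuffle g2 g3 (snd P)"
        by (simp add: shuffle_eq)
    qed
    also have "\<dots> = shuffle g1 (shuffle g2 g3) T"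
      using True by (subst (2) shuffle_eq) simp
    finally show ?thesis .
  qed
qed

lemma shuffle_comm:
  "shuffle g1 g2 = (shuffle g2 g1 :: _ \<Rightarrow> 'k::{comm_ring_1,ring_char_0})"
proof (rule ext)
  fix T
  have "(\<Sum>P\<in>#D T. g1 (fst P) * g2 (snd P)) = (\<Sum>P\<in>#image_mset prod.swap (D T). g1 (fst P) * g2 (snd P))"
    by (simp only: D_swap)
  also have "\<dots> = (\<Sum>P\<in>#D T. g2 (fst P) * g1 (snd P))"
    by (simp add: multiset.map_comp o_def mult.commute)
  finally show "shuffle g1 g2 T = (shuffle g2 g1 :: _ \<Rightarrow> 'k) T"
    by (simp add: shuffle_eq)
qed

lemma sum_mset_zero: "(\<And>x. x \<in># M \<Longrightarrow> f x = 0) \<Longrightarrow> (\<Sum>x\<in>#M. f x) = (0::'a::comm_monoid_add)"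
  by (induction M) auto

lemma inK_shuffle:
  assumes "inK g1" "inK g2"
  shows "inK (shuffle g1 g2 :: _ \<Rightarrow> 'k::{comm_ring_1,ring_char_0})"
proof -
  have sub: "supp (shuffle g1 g2 :: _ \<Rightarrow> 'k) \<subseteq> (\<Union>A\<in>supp g1. \<Union>B\<in>supp g2. {T. is_mono T \<and> (A, B) \<in># D T})"
  proof
    fix T assume "T \<in> supp (shuffle g1 g2 :: _ \<Rightarrow> 'k)"
    then have ne: "(shuffle g1 g2 :: _ \<Rightarrow> 'k) T \<noteq> 0" by (simp add: supp_def)
    then have m: "is_mono T" by (simp add: shuffle_def split: if_splits)
    then have "(\<Sum>P\<in>#D T. g1 (fst P) * g2 (snd P)) \<noteq> 0" using ne by (simp add: shuffle_eq)
    then have "\<exists>P. P \<in># D T \<and> g1 (fst P) * g2 (snd P) \<noteq> 0"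
    proof (rule contrapos_np)
      assume "\<not> (\<exists>P. P \<in># D T \<and> g1 (fst P) * g2 (snd P) \<noteq> 0)"
      then show "(\<Sum>P\<in>#D T. g1 (fst P) * g2 (snd P)) = 0" by (intro sum_mset_zero) blast
    qed
    then obtain P where P: "P \<in># D T" "g1 (fst P) * g2 (snd P) \<noteq> 0" by blast
    then have "fst P \<in> supp g1" "snd P \<in> supp g2" by (auto simp: supp_def)
    moreover have "T \<in> {T. is_mono T \<and> (fst P, snd P) \<in># D T}" using P m by simp
    ultimately show "T \<in> (\<Union>A\<in>supp g1. \<Union>B\<in>supp g2. {T. is_mono T \<and> (A, B) \<in># D T})"
      by blast
  qed
  have "finite (\<Union>A\<in>supp g1. \<Union>B\<in>supp g2. {T. is_mono T \<and> (A, B) \<in># D T})"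
    using assms unfolding inK_def by (intro finite_UN_I finite_D_inv) auto
  then have "finite (supp (shuffle g1 g2 :: _ \<Rightarrow> 'k))" by (rule finite_subset[OF sub])
  moreover have "supp (shuffle g1 g2 :: _ \<Rightarrow> 'k) \<subseteq> {t. is_mono t}"
    by (auto simp: supp_def shuffle_def split: if_splits)
  ultimately show ?thesis by (simp add: inK_def)
qed

lemma shuffle_one:
  "shuffle (mono_vec (Node []) :: _ \<Rightarrow> 'k::{comm_ring_1,ring_char_0}) (mono_vec (Node [])) = mono_vec (Node [])"
proof (rule ext)
  fix T :: "'a tree"
  show "shuffle (mono_vec (Node []) :: _ \<Rightarrow> 'k) (mono_vec (Node [])) T = mono_vec (Node []) T"
  proof (cases "T = Node []")
    case True
    then show ?thesis by (simp add: shuffle_eq vp_def vee_mono_def is_mono_def mono_vec_def)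
  next
    case False
    show ?thesis
    proof (cases "is_mono T")
      case m: True
      then have "reduced T" using False by (simp add: is_mono_def)
      then have n: "1 \<le> nl T" by (rule nl_reduced)
      have "(\<Sum>P\<in>#D T. (mono_vec (Node []) (fst P) :: 'k) * mono_vec (Node []) (snd P)) = 0"
      proof (rule sum_mset_zero)
        fix P assume "P \<in># D T"
        then have "nl (fst P) + nl (snd P) = nl T" using D_props[of "fst P" "snd P" T] by simp
        then have "fst P \<noteq> Node [] \<or> snd P \<noteq> Node []" using n by auto
        then show "(mono_vec (Node []) (fst P) :: 'k) * mono_vec (Node []) (snd P) = 0"
          by (auto simp: mono_vec_def)
      qed
      then show ?thesis using m False by (simp add: shuffle_eq mono_vec_def)
    next
      case False
      then show ?thesis using \<open>T \<noteq> Node []\<close> by (simp add: shuffle_def mono_vec_def)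
    qed
  qed
qed

lemma finite_shuffle_sets: "finite (shuffle_sets T A B)"
proof -
  have "shuffle_sets T A B \<subseteq> Pow (Le T)" by (auto simp: shuffle_sets_def)
  then show ?thesis using finite_Le by (metis finite_Pow_iff finite_subset)
qed

lemma is_shuffle_iff: "is_shuffle T A B \<longleftrightarrow> (A, B) \<in># D T"
proof -
  have "is_shuffle T A B \<longleftrightarrow> shuffle_sets T A B \<noteq> {}"
    by (auto simp: is_shuffle_def shuffle_sets_def)
  also have "\<dots> \<longleftrightarrow> 0 < card (shuffle_sets T A B)"
    using finite_shuffle_sets[of T A B] by (simp add: card_gt_0_iff)
  also have "\<dots> \<longleftrightarrow> (A, B) \<in># D T" by (simp flip: count_D)
  finally show ?thesis .
qed

lemma part5:
  fixes T1 T2 :: "'x tree"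
  assumes "is_mono T1" "is_mono T2"
  shows "finite {T. is_mono T \<and> is_shuffle T T1 T2}
          \<and> (\<forall>T. is_mono T \<and> is_shuffle T T1 T2 \<longrightarrow> 1 \<le> shuffle_coeff T T1 T2)
          \<and> (shuffle (mono_vec T1) (mono_vec T2) :: 'x tree \<Rightarrow> 'k::{comm_ring_1,ring_char_0})
              = (\<lambda>S. \<Sum>T \<in> {T. is_mono T \<and> is_shuffle T T1 T2}.
                       of_nat (shuffle_coeff T T1 T2) * mono_vec T S)"
proof (intro conjI allI impI)
  let ?Sh = "{T. is_mono T \<and> is_shuffle T T1 T2}"
  have fin: "finite ?Sh"
    using finite_D_inv[of T1 T2] by (simp add: is_shuffle_iff)
  then show "finite ?Sh" .
  fix T assume "is_mono T \<and> is_shuffle T T1 T2"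
  then have "(T1, T2) \<in># D T" by (simp add: is_shuffle_iff)
  then show "1 \<le> shuffle_coeff T T1 T2"
    by (simp add: shuffle_coeff_def flip: count_D)
next
  let ?Sh = "{T. is_mono T \<and> is_shuffle T T1 T2}"
  have fin: "finite ?Sh"
    using finite_D_inv[of T1 T2] by (simp add: is_shuffle_iff)
  show "(shuffle (mono_vec T1) (mono_vec T2) :: 'x tree \<Rightarrow> 'k)
        = (\<lambda>S. \<Sum>T \<in> ?Sh. of_nat (shuffle_coeff T T1 T2) * mono_vec T S)"
  proof (rule ext)
    fix S :: "'x tree"
    have r: "(\<Sum>T \<in> ?Sh. (of_nat (shuffle_coeff T T1 T2) :: 'k) * mono_vec T S)
          = (\<Sum>T \<in> ?Sh. if T = S then of_nat (shuffle_coeff T T1 T2) else 0)"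
      by (rule sum.cong) (auto simp: mono_vec_def)
    also have "\<dots> = (if S \<in> ?Sh then of_nat (shuffle_coeff S T1 T2) else 0)"
      using fin by (simp add: sum.delta')
    finally have r': "(\<Sum>T \<in> ?Sh. (of_nat (shuffle_coeff T T1 T2) :: 'k) * mono_vec T S)
          = (if S \<in> ?Sh then of_nat (shuffle_coeff S T1 T2) else 0)" .
    have l: "(\<Sum>P\<in>#D S. (mono_vec T1 (fst P) :: 'k) * mono_vec T2 (snd P)) = of_nat (count (D S) (T1, T2))"
    proof -
      have "(\<Sum>P\<in>#D S. (mono_vec T1 (fst P) :: 'k) * mono_vec T2 (snd P))
          = (\<Sum>P\<in>#D S. if P = (T1, T2) then 1 else 0)"
        by (rule arg_cong[where f = sum_mset], rule image_mset_cong) (auto simp: mono_vec_def)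
      also have "\<dots> = of_nat (count (D S) (T1, T2)) * 1" by (rule sum_mset_if_eq)
      finally show ?thesis by simp
    qed
    show "(shuffle (mono_vec T1) (mono_vec T2) :: 'x tree \<Rightarrow> 'k) S
        = (\<Sum>T \<in> ?Sh. of_nat (shuffle_coeff T T1 T2) * mono_vec T S)"
    proof (cases "is_mono S")
      case False then show ?thesis using r' by (simp add: shuffle_def)
    next
      case True
      have "(shuffle (mono_vec T1) (mono_vec T2) :: 'x tree \<Rightarrow> 'k) S = of_nat (shuffle_coeff S T1 T2)"
        using True l by (simp add: shuffle_eq count_D shuffle_coeff_def)
      moreover have "S \<notin> ?Sh \<Longrightarrow> shuffle_coeff S T1 T2 = 0"
        using True by (simp add: is_shuffle_iff shuffle_coeff_def not_in_iff flip: count_D)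
      ultimately show ?thesis using r' by (cases "S \<in> ?Sh") simp_all
    qed
  qed
qed

theorem proposition4p6p1:
  shows "(\<forall>(g1 :: ('x::countable) tree \<Rightarrow> 'k::field_char_0) g2.
            inK g1 \<and> inK g2 \<longrightarrow> inK (shuffle g1 g2))
       \<and> (\<forall>(g1 :: 'x tree \<Rightarrow> 'k) g2.
            inK g1 \<and> inK g2 \<longrightarrow> shuffle g1 g2 = shuffle g2 g1)
       \<and> (\<forall>(g1 :: 'x tree \<Rightarrow> 'k) g2 g3.
            inK g1 \<and> inK g2 \<and> inK g3 \<longrightarrow>
              shuffle (shuffle g1 g2) g3 = shuffle g1 (shuffle g2 g3))
       \<and> shuffle (mono_vec (Node []) :: 'x tree \<Rightarrow> 'k) (mono_vec (Node []))
           = mono_vec (Node [])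
       \<and> (\<forall>T1 T2 :: 'x tree. is_mono T1 \<and> is_mono T2 \<longrightarrow>
            finite {T. is_mono T \<and> is_shuffle T T1 T2}
          \<and> (\<forall>T. is_mono T \<and> is_shuffle T T1 T2 \<longrightarrow> 1 \<le> shuffle_coeff T T1 T2)
          \<and> (shuffle (mono_vec T1) (mono_vec T2) :: 'x tree \<Rightarrow> 'k)
              = (\<lambda>S. \<Sum>T \<in> {T. is_mono T \<and> is_shuffle T T1 T2}.
                       of_nat (shuffle_coeff T T1 T2) * mono_vec T S))"
proof (intro conjI)
  show "\<forall>(g1 :: 'x tree \<Rightarrow> 'k) g2. inK g1 \<and> inK g2 \<longrightarrow> inK (shuffle g1 g2)"
    using inK_shuffle by blast
  show "\<forall>(g1 :: 'x tree \<Rightarrow> 'k) g2. inK g1 \<and> inK g2 \<longrightarrow> shuffle g1 g2 = shuffle g2 g1"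
    using shuffle_comm by blast
  show "\<forall>(g1 :: 'x tree \<Rightarrow> 'k) g2 g3. inK g1 \<and> inK g2 \<and> inK g3 \<longrightarrow>
              shuffle (shuffle g1 g2) g3 = shuffle g1 (shuffle g2 g3)"
    using shuffle_assoc by blast
  show "shuffle (mono_vec (Node []) :: 'x tree \<Rightarrow> 'k) (mono_vec (Node [])) = mono_vec (Node [])"
    by (rule shuffle_one)
  show "\<forall>T1 T2 :: 'x tree. is_mono T1 \<and> is_mono T2 \<longrightarrow>
            finite {T. is_mono T \<and> is_shuffle T T1 T2}
          \<and> (\<forall>T. is_mono T \<and> is_shuffle T T1 T2 \<longrightarrow> 1 \<le> shuffle_coeff T T1 T2)
          \<and> (shuffle (mono_vec T1) (mono_vec T2) :: 'x tree \<Rightarrow> 'k)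
              = (\<lambda>S. \<Sum>T \<in> {T. is_mono T \<and> is_shuffle T T1 T2}.
                       of_nat (shuffle_coeff T T1 T2) * mono_vec T S)"
    using part5 by blast
qed

end
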